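(* Let $G=H\langle a\rangle$ be a group, where $H$ is a normal abelian subgroup of $G$. Then $a$ is an almost right Engel element of $G$ if and only if it is an almost left Engel element of $G$. In that case $\mathcal L(a)=\mathcal R(a)$.
   Context: Commutators: $[x,y]=x^{-1}y^{-1}xy$, left-normed, and $[x,{}_n\,y]=[x,y,\dots,y]$ with $y$ repeated $n$ times. A right Engel sink of $g\in G$ is a set $S$ such that for every $x\in G$ one has $[g,{}_n\,x]\in S$ for all sufficiently large $n$; a left Engel sink of $g$ is a set $S$ such that for every $x\in G$ one has $[x,{}_n\,g]\in S$ for all sufficiently large $n$. The element $g$ is almost right (resp. left) Engel if it has a finite right (resp. left) Engel sink; in that case $\mathcal R(g)$ (resp. $\mathcal L(g)$) denotes the minimal such finite sink. *)

theory Defs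
  imports "HOL-Algebra.Algebra"
begin

definition commutator :: "('a, 'b) monoid_scheme \<Rightarrow> 'a \<Rightarrow> 'a \<Rightarrow> 'a" where
  "commutator G x y = inv\<^bsub>G\<^esub> x \<otimes>\<^bsub>G\<^esub> inv\<^bsub>G\<^esub> y \<otimes>\<^bsub>G\<^esub> x \<otimes>\<^bsub>G\<^esub> y"

fun engel_comm :: "('a, 'b) monoid_scheme \<Rightarrow> 'a \<Rightarrow> 'a \<Rightarrow> nat \<Rightarrow> 'a" where
  "engel_comm G x y 0 = x"
| "engel_comm G x y (Suc n) = commutator G (engel_comm G x y n) y"

definition right_engel_sink :: "('a, 'b) monoid_scheme \<Rightarrow> 'a \<Rightarrow> 'a set \<Rightarrow> bool" where
  "right_engel_sink G g S \<longleftrightarrow>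
     (\<forall>x\<in>carrier G. \<exists>N. \<forall>n\<ge>N. engel_comm G g x n \<in> S)"

definition left_engel_sink :: "('a, 'b) monoid_scheme \<Rightarrow> 'a \<Rightarrow> 'a set \<Rightarrow> bool" where
  "left_engel_sink G g S \<longleftrightarrow>
     (\<forall>x\<in>carrier G. \<exists>N. \<forall>n\<ge>N. engel_comm G x g n \<in> S)"

definition almost_right_engel :: "('a, 'b) monoid_scheme \<Rightarrow> 'a \<Rightarrow> bool" where
  "almost_right_engel G g \<longleftrightarrow> (\<exists>S. finite S \<and> right_engel_sink G g S)"

definition almost_left_engel :: "('a, 'b) monoid_scheme \<Rightarrow> 'a \<Rightarrow> bool" where
  "almost_left_engel G g \<longleftrightarrow> (\<exists>S. finite S \<and> left_engel_sink G g S)"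

definition min_right_sink :: "('a, 'b) monoid_scheme \<Rightarrow> 'a \<Rightarrow> 'a set" where
  "min_right_sink G g = (THE S. finite S \<and> right_engel_sink G g S \<and>
      (\<forall>T. finite T \<and> right_engel_sink G g T \<longrightarrow> S \<subseteq> T))"

definition min_left_sink :: "('a, 'b) monoid_scheme \<Rightarrow> 'a \<Rightarrow> 'a set" where
  "min_left_sink G g = (THE S. finite S \<and> left_engel_sink G g S \<and>
      (\<forall>T. finite T \<and> left_engel_sink G g T \<longrightarrow> S \<subseteq> T))"

end

theory Submission
  imports Defs
begin

definition Per :: "('a \<Rightarrow> 'a) \<Rightarrow> 'a set \<Rightarrow> 'a set" where
  "Per f A = {p \<in> A. \<exists>m>0. (f ^^ m) p = p}"

lemma funpow_closed: "(\<And>x. x \<in> A \<Longrightarrow> f x \<in> A) \<Longrightarrow> x \<in> A \<Longrightarrow> (f ^^ n) x \<in> A"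
  by (induct n) auto

lemma funpow_period: "(f ^^ m) p = p \<Longrightarrow> (f ^^ (m * k)) p = p"
  by (induct k) (simp_all add: funpow_add)

lemma funpow_agree:
  assumes "\<And>x. x \<in> A \<Longrightarrow> f x \<in> A" "\<And>x. x \<in> A \<Longrightarrow> f x = g x" "x \<in> A"
  shows "(f ^^ n) x = (g ^^ n) x"
  using assms(3)
proof (induct n)
  case (Suc n)
  then show ?case using assms funpow_closed[of A f x n] by simp
qed simp

lemma eventually_Per:
  assumes fA: "\<And>x. x \<in> A \<Longrightarrow> f x \<in> A" and s: "s \<in> A" and fin: "finite S"
    and ev: "\<forall>n\<ge>N. (f ^^ n) s \<in> S"
  shows "\<exists>M. \<forall>n\<ge>M. (f ^^ n) s \<in> Per f A"
proof -
  define g where "g n = (f ^^ (N + n)) s" for n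
  have "range g \<subseteq> S" using ev by (auto simp: g_def)
  hence "finite (range g)" using fin finite_subset by blast
  hence "\<not> inj g" using finite_imageD infinite_UNIV_nat by blast
  then obtain i j where ij: "i < j" "g i = g j"
    unfolding inj_def by (metis linorder_neqE_nat)
  define M where "M = N + i"
  define d where "d = j - i"
  have d0: "d > 0" using ij d_def by simp
  have "(f ^^ d) ((f ^^ M) s) = (f ^^ (d + M)) s" by (simp add: funpow_add)
  also have "d + M = N + j" using ij by (simp add: d_def M_def)
  also have "(f ^^ (N + j)) s = (f ^^ M) s" using ij by (simp add: g_def M_def)
  finally have per: "(f ^^ d) ((f ^^ M) s) = (f ^^ M) s" .
  have "(f ^^ n) s \<in> Per f A" if "n \<ge> M" for n
  proof -
    have "(f ^^ d) ((f ^^ n) s) = (f ^^ (n - M)) ((f ^^ d) ((f ^^ M) s))"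
    proof -
      have "(f ^^ d) ((f ^^ n) s) = (f ^^ (d + n)) s" by (simp add: funpow_add)
      also have "d + n = (n - M) + (d + M)" using that by simp
      also have "(f ^^ ((n - M) + (d + M))) s = (f ^^ (n - M)) ((f ^^ d) ((f ^^ M) s))"
        by (simp add: funpow_add)
      finally show ?thesis .
    qed
    also have "\<dots> = (f ^^ (n - M)) ((f ^^ M) s)" using per by simp
    also have "\<dots> = (f ^^ n) s" using that
      by (metis funpow_add le_add_diff_inverse2 o_apply)
    finally have "(f ^^ d) ((f ^^ n) s) = (f ^^ n) s" .
    moreover have "(f ^^ n) s \<in> A" using funpow_closed[of A f s n] fA s by blast
    ultimately show ?thesis using d0 by (auto simp: Per_def)
  qed
  thus ?thesis by blast
qed

lemma Per_in_sink:
  assumes "p \<in> Per f A" "\<forall>n\<ge>N. (f ^^ n) p \<in> S" shows "p \<in> S"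
proof -
  obtain m where m: "m > 0" "(f ^^ m) p = p" using assms(1) by (auto simp: Per_def)
  have "(f ^^ (m * N)) p = p" by (rule funpow_period[OF m(2)])
  moreover have "m * N \<ge> N" using m(1) by simp
  ultimately show ?thesis using assms(2) by metis
qed

lemma cond_lemma:
  assumes fA: "\<And>x. x \<in> A \<Longrightarrow> f x \<in> A" and fin: "finite S"
    and C: "\<forall>h\<in>A. \<exists>N. \<forall>n\<ge>N. (f ^^ n) h \<in> S"
  shows "Per f A \<subseteq> S" "finite (Per f A)" "\<forall>h\<in>A. \<exists>N. \<forall>n\<ge>N. (f ^^ n) h \<in> Per f A"
proof -
  show 1: "Per f A \<subseteq> S"
  proof
    fix p assume p: "p \<in> Per f A"
    hence "p \<in> A" by (simp add: Per_def)
    then obtain N where "\<forall>n\<ge>N. (f ^^ n) p \<in> S" using C by blast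
    thus "p \<in> S" using Per_in_sink[OF p] by blast
  qed
  show "finite (Per f A)" using 1 fin finite_subset by blast
  show "\<forall>h\<in>A. \<exists>N. \<forall>n\<ge>N. (f ^^ n) h \<in> Per f A"
  proof
    fix h assume h: "h \<in> A"
    then obtain N where "\<forall>n\<ge>N. (f ^^ n) h \<in> S" using C by blast
    thus "\<exists>N. \<forall>n\<ge>N. (f ^^ n) h \<in> Per f A" using eventually_Per[of A f h S N] fA fin h by blast
  qed
qed

lemma engel_funpow: "engel_comm G x y n = ((\<lambda>u. commutator G u y) ^^ n) x"
  by (induct n) auto

definition cj :: "('a, 'b) monoid_scheme \<Rightarrow> 'a \<Rightarrow> 'a \<Rightarrow> 'a" where
  "cj G x w = inv\<^bsub>G\<^esub> x \<otimes>\<^bsub>G\<^esub> (w \<otimes>\<^bsub>G\<^esub> x)"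

locale es = normal H G for H and G (structure) +
  fixes a
  assumes ab: "\<forall>x\<in>H. \<forall>y\<in>H. x \<otimes> y = y \<otimes> x"
    and aG: "a \<in> carrier G"
    and gen: "carrier G = generate G (H \<union> {a})"
begin

lemma Hc[simp]: "u \<in> H \<Longrightarrow> u \<in> carrier G" by (rule mem_carrier)
lemma Hinv[simp]: "u \<in> H \<Longrightarrow> inv u \<in> H" by (rule m_inv_closed)
lemma Hmult[simp]: "u \<in> H \<Longrightarrow> v \<in> H \<Longrightarrow> u \<otimes> v \<in> H" using subgroup_axioms by (metis subgroup.m_closed)
lemma comm: "x \<in> H \<Longrightarrow> y \<in> H \<Longrightarrow> x \<otimes> y = y \<otimes> x" using ab by blast
lemma lcomm: "x \<in> H \<Longrightarrow> y \<in> H \<Longrightarrow> z \<in> H \<Longrightarrow> x \<otimes> (y \<otimes> z) = y \<otimes> (x \<otimes> z)"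
  by (metis comm m_assoc Hc)
lemmas ac = m_assoc comm lcomm

lemma cancel_r[simp]: "x \<in> carrier G \<Longrightarrow> y \<in> carrier G \<Longrightarrow> x \<otimes> (inv x \<otimes> y) = y"
  by (simp add: m_assoc[symmetric])
lemma cancel_l[simp]: "x \<in> carrier G \<Longrightarrow> y \<in> carrier G \<Longrightarrow> inv x \<otimes> (x \<otimes> y) = y"
  by (simp add: m_assoc[symmetric])

lemma cj_H[simp]: "x \<in> carrier G \<Longrightarrow> w \<in> H \<Longrightarrow> cj G x w \<in> H"
  unfolding cj_def using inv_op_closed1 by (simp add: m_assoc)
lemma cj_mult: "x \<in> carrier G \<Longrightarrow> u \<in> carrier G \<Longrightarrow> v \<in> carrier G \<Longrightarrow>
   cj G x (u \<otimes> v) = cj G x u \<otimes> cj G x v"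
  by (simp add: cj_def m_assoc)
lemma cj_inv: "x \<in> carrier G \<Longrightarrow> u \<in> carrier G \<Longrightarrow> cj G x (inv u) = inv (cj G x u)"
  by (simp add: cj_def m_assoc inv_mult_group)
lemma cj_comp: "y \<in> carrier G \<Longrightarrow> z \<in> carrier G \<Longrightarrow> v \<in> carrier G \<Longrightarrow>
   cj G (y \<otimes> z) v = cj G z (cj G y v)"
  by (simp add: cj_def m_assoc inv_mult_group)
lemma cj_ab: "x \<in> H \<Longrightarrow> w \<in> H \<Longrightarrow> cj G x w = w"
  by (simp add: cj_def comm[of w x])
lemma comm_cj: "u \<in> carrier G \<Longrightarrow> x \<in> carrier G \<Longrightarrow> commutator G u x = inv u \<otimes> cj G x u"
  by (simp add: commutator_def cj_def m_assoc)

definition phi :: "'a \<Rightarrow> 'a" where "phi = (\<lambda>u. commutator G u a)"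

abbreviation P where "P \<equiv> Per phi H"

lemma phi_eq: "u \<in> carrier G \<Longrightarrow> phi u = inv u \<otimes> cj G a u"
  by (simp add: phi_def comm_cj aG)

lemma phi_H[simp]: "u \<in> H \<Longrightarrow> phi u \<in> H"
  by (simp add: phi_eq aG)

lemma phi_mult: "u \<in> H \<Longrightarrow> v \<in> H \<Longrightarrow> phi (u \<otimes> v) = phi u \<otimes> phi v"
  by (simp add: phi_eq aG cj_mult inv_mult_group ac)

lemma phi_one: "phi \<one> = \<one>"
  by (simp add: phi_def commutator_def aG)

lemma phi_inv: "u \<in> H \<Longrightarrow> phi (inv u) = inv (phi u)"
  by (simp add: phi_eq aG cj_inv inv_mult_group ac)

lemma phin_H: "u \<in> H \<Longrightarrow> (phi ^^ k) u \<in> H"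
  using funpow_closed[of H phi u k] by simp

lemma phin_mult: "u \<in> H \<Longrightarrow> v \<in> H \<Longrightarrow> (phi ^^ k) (u \<otimes> v) = (phi ^^ k) u \<otimes> (phi ^^ k) v"
  by (induct k) (simp_all add: phi_mult phin_H)

lemma phin_inv: "u \<in> H \<Longrightarrow> (phi ^^ k) (inv u) = inv ((phi ^^ k) u)"
  by (induct k) (simp_all add: phi_inv phin_H)

lemma phin_one: "(phi ^^ k) \<one> = \<one>"
  by (induct k) (simp_all add: phi_one)

lemma P_H: "p \<in> P \<Longrightarrow> p \<in> H" by (simp add: Per_def)

lemma one_P: "\<one> \<in> P"
  using phi_one by (auto simp: Per_def intro!: exI[of _ 1])

lemma mult_P: assumes "p \<in> P" "q \<in> P" shows "p \<otimes> q \<in> P"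
proof -
  obtain m where m: "m > 0" "(phi ^^ m) p = p" "p \<in> H" using assms(1) by (auto simp: Per_def)
  obtain k where k: "k > 0" "(phi ^^ k) q = q" "q \<in> H" using assms(2) by (auto simp: Per_def)
  have "(phi ^^ (m * k)) p = p" by (rule funpow_period[OF m(2)])
  moreover have "(phi ^^ (k * m)) q = q" by (rule funpow_period[OF k(2)])
  ultimately have "(phi ^^ (m * k)) (p \<otimes> q) = p \<otimes> q"
    using m k by (simp add: phin_mult mult.commute)
  thus ?thesis using m k by (auto simp: Per_def intro!: exI[of _ "m * k"])
qed

lemma inv_P: assumes "p \<in> P" shows "inv p \<in> P"
proof -
  obtain m where m: "m > 0" "(phi ^^ m) p = p" "p \<in> H" using assms(1) by (auto simp: Per_def)
  thus ?thesis by (auto simp: Per_def phin_inv)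
qed

lemma comm_pres_P:
  assumes gH: "\<And>v. v \<in> H \<Longrightarrow> g v \<in> H" and gc: "\<And>v. v \<in> H \<Longrightarrow> phi (g v) = g (phi v)"
    and p: "p \<in> P"
  shows "g p \<in> P"
proof -
  obtain m where m: "m > 0" "(phi ^^ m) p = p" "p \<in> H" using p by (auto simp: Per_def)
  have "(phi ^^ k) (g v) = g ((phi ^^ k) v)" if "v \<in> H" for k v
    using that by (induct k) (simp_all add: gc phin_H)
  thus ?thesis using m gH by (auto simp: Per_def)
qed

lemma phi_P: "p \<in> P \<Longrightarrow> phi p \<in> P"
  by (rule comm_pres_P) auto

lemma comm_a_mult: "x \<in> carrier G \<Longrightarrow> y \<in> carrier G \<Longrightarrow>
   commutator G a (x \<otimes> y) = commutator G a y \<otimes> cj G y (commutator G a x)"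
  by (simp add: commutator_def cj_def m_assoc inv_mult_group aG)

lemma R1: assumes "x \<in> carrier G" shows "commutator G a x \<in> H"
proof -
  have "x \<in> generate G (H \<union> {a})" using assms gen by simp
  thus ?thesis
  proof (induct rule: generate.induct)
    case one
    then show ?case by (simp add: commutator_def aG)
  next
    case (incl h)
    then show ?case
    proof
      assume h: "h \<in> H"
      have "commutator G a h = (inv a \<otimes> inv h \<otimes> a) \<otimes> h" by (simp add: commutator_def)
      thus ?thesis using inv_op_closed1[OF aG, of "inv h"] h by simp
    qed (simp add: commutator_def aG m_assoc)
  next
    case (inv h)
    then show ?case
    proof
      assume h: "h \<in> H"
      have "commutator G a (inv h) = (inv a \<otimes> h \<otimes> a) \<otimes> inv h" using h by (simp add: commutator_def)
      thus ?thesis using inv_op_closed1[OF aG, of "h"] h by simp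
    qed (simp add: commutator_def aG m_assoc)
  next
    case (eng x y)
    then have "x \<in> carrier G" "y \<in> carrier G" using gen by auto
    then show ?case using eng by (simp add: comm_a_mult)
  qed
qed

lemma R1': "x \<in> carrier G \<Longrightarrow> commutator G x a \<in> H"
proof -
  assume x: "x \<in> carrier G"
  have "commutator G x a = inv (commutator G a x)"
    using x by (simp add: commutator_def m_assoc inv_mult_group aG)
  thus ?thesis using R1[OF x] by simp
qed

lemma cj_commute: assumes x: "x \<in> carrier G" and v: "v \<in> H"
  shows "cj G x (cj G a v) = cj G a (cj G x v)"
proof -
  define c where "c = commutator G a x"
  have c: "c \<in> H" using R1[OF x] c_def by simp
  have ax: "a \<otimes> x = x \<otimes> a \<otimes> c" using x by (simp add: c_def commutator_def m_assoc aG)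
  have "cj G x (cj G a v) = cj G (a \<otimes> x) v" using x v by (simp add: cj_comp aG)
  also have "\<dots> = cj G c (cj G (x \<otimes> a) v)" using x v c by (simp add: ax cj_comp aG)
  also have "\<dots> = cj G (x \<otimes> a) v" using x v c by (simp add: cj_ab aG)
  also have "\<dots> = cj G a (cj G x v)" using x v by (simp add: cj_comp aG)
  finally show ?thesis .
qed

lemma cj_P: "x \<in> carrier G \<Longrightarrow> p \<in> P \<Longrightarrow> cj G x p \<in> P"
  by (rule comm_pres_P) (simp_all add: phi_eq aG cj_mult cj_inv cj_commute)

lemma R3: "x \<in> carrier G \<Longrightarrow> u \<in> H \<Longrightarrow> phi (commutator G u x) = commutator G (phi u) x"
  by (simp add: comm_cj phi_eq aG cj_mult cj_inv cj_commute inv_mult_group ac)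

lemma comm_w_mult: "w \<in> carrier G \<Longrightarrow> x \<in> carrier G \<Longrightarrow> y \<in> carrier G \<Longrightarrow>
   commutator G w (x \<otimes> y) = commutator G w y \<otimes> cj G y (commutator G w x)"
  by (simp add: commutator_def cj_def m_assoc inv_mult_group)

lemma comm_w_inva: "w \<in> carrier G \<Longrightarrow> commutator G w (inv a) = cj G (inv a) (inv (phi w))"
  by (simp add: commutator_def cj_def phi_def m_assoc inv_mult_group aG)

lemma Q: assumes "x \<in> carrier G"
  shows "\<forall>w\<in>H. phi w \<in> P \<longrightarrow> commutator G w x \<in> P"
proof -
  have "x \<in> generate G (H \<union> {a})" using assms gen by simp
  thus ?thesis
  proof (induct rule: generate.induct)
    case one
    then show ?case by (simp add: commutator_def one_P)
  next
    case (incl h)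
    then show ?case
    proof
      assume h: "h \<in> H"
      show ?thesis using h by (auto simp: comm_cj cj_ab one_P)
    qed (simp add: phi_def)
  next
    case (inv h)
    then show ?case
    proof
      assume h: "h \<in> H"
      show ?thesis using h by (auto simp: comm_cj cj_ab one_P)
    next
      assume "h \<in> {a}"
      then show ?thesis by (auto simp: comm_w_inva cj_P inv_P aG)
    qed
  next
    case (eng x y)
    then have "x \<in> carrier G" "y \<in> carrier G" using gen by auto
    then show ?case using eng by (simp add: comm_w_mult cj_P mult_P)
  qed
qed

lemma psi_H: "x \<in> carrier G \<Longrightarrow> u \<in> H \<Longrightarrow> commutator G u x \<in> H"
  by (simp add: comm_cj)

lemma psi_P: "x \<in> carrier G \<Longrightarrow> p \<in> P \<Longrightarrow> commutator G p x \<in> P"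
  using Q[of x] phi_P P_H by blast

lemma phin_psi: "x \<in> carrier G \<Longrightarrow> v \<in> H \<Longrightarrow>
   (phi ^^ m) (commutator G v x) = commutator G ((phi ^^ m) v) x"
  by (induct m) (simp_all add: R3 phin_H)

lemma psi_lemma: "x \<in> carrier G \<Longrightarrow> v \<in> H \<Longrightarrow> (phi ^^ m) v \<in> P \<Longrightarrow>
   ((\<lambda>u. commutator G u x) ^^ m) v \<in> P"
proof (induct m arbitrary: v)
  case 0
  then show ?case by simp
next
  case (Suc m)
  have "(phi ^^ m) (commutator G v x) \<in> P"
    using Suc.prems Q[of x] phin_H[of v m] by (simp add: phin_psi)
  hence "((\<lambda>u. commutator G u x) ^^ m) (commutator G v x) \<in> P"
    using Suc by (simp add: psi_H)
  thus ?case by (simp add: funpow_Suc_right del: funpow.simps)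
qed

lemma psi_eventually: assumes x: "x \<in> carrier G" and v: "v \<in> H" and m: "(phi ^^ m) v \<in> P"
  and n: "n \<ge> m"
  shows "((\<lambda>u. commutator G u x) ^^ n) v \<in> P"
proof -
  have "((\<lambda>u. commutator G u x) ^^ n) v =
     ((\<lambda>u. commutator G u x) ^^ (n - m)) (((\<lambda>u. commutator G u x) ^^ m) v)"
    using n by (metis funpow_add le_add_diff_inverse2 o_apply)
  thus ?thesis using funpow_closed[of P "\<lambda>u. commutator G u x"] psi_P[OF x]
      psi_lemma[OF x v m] by simp
qed

definition Cond where "Cond S \<longleftrightarrow> (\<forall>h\<in>H. \<exists>N. \<forall>n\<ge>N. (phi ^^ n) h \<in> S)"

lemma Cond_consequences: assumes "finite S" "Cond S"
  shows "P \<subseteq> S" "finite P" "Cond P"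
  using cond_lemma[of H phi S] assms by (auto simp: Cond_def)

lemma left_Cond: assumes "left_engel_sink G a S" shows "Cond S"
  unfolding Cond_def
proof
  fix h assume h: "h \<in> H"
  then obtain N where "\<forall>n\<ge>N. engel_comm G h a n \<in> S"
    using assms Hc[OF h] unfolding left_engel_sink_def by blast
  thus "\<exists>N. \<forall>n\<ge>N. (phi ^^ n) h \<in> S" by (auto simp: engel_funpow phi_def)
qed

lemma psi_ah: "h \<in> H \<Longrightarrow> u \<in> H \<Longrightarrow> commutator G u (a \<otimes> inv h) = phi u"
proof -
  assume h: "h \<in> H" and u: "u \<in> H"
  have "commutator G u (a \<otimes> inv h) = inv u \<otimes> (h \<otimes> (cj G a u \<otimes> inv h))"
    using h u by (simp add: commutator_def cj_def m_assoc inv_mult_group aG)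
  also have "\<dots> = inv u \<otimes> cj G a u" using h u by (simp add: ac aG)
  finally show ?thesis using u by (simp add: phi_eq aG)
qed

lemma comm_ah: "h \<in> H \<Longrightarrow> commutator G a (a \<otimes> inv h) = phi h"
proof -
  assume h: "h \<in> H"
  have "commutator G a (a \<otimes> inv h) = cj G a h \<otimes> inv h"
    using h by (simp add: commutator_def cj_def m_assoc inv_mult_group aG)
  also have "\<dots> = inv h \<otimes> cj G a h" using h by (simp add: ac aG)
  finally show ?thesis using h by (simp add: phi_eq aG)
qed

lemma right_Cond: assumes "right_engel_sink G a S" shows "Cond S"
  unfolding Cond_def
proof
  fix h assume h: "h \<in> H"
  define x where "x = a \<otimes> inv h"
  have x: "x \<in> carrier G" using h aG by (simp add: x_def)
  obtain N where N: "\<forall>n\<ge>N. engel_comm G a x n \<in> S"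
    using assms x by (auto simp: right_engel_sink_def)
  have eq: "engel_comm G a x (Suc k) = (phi ^^ Suc k) h" for k
  proof -
    have "engel_comm G a x (Suc k) = ((\<lambda>u. commutator G u x) ^^ k) (commutator G a x)"
      by (simp add: engel_funpow funpow_Suc_right del: funpow.simps)
    also have "\<dots> = (phi ^^ k) (phi h)"
    proof -
      have "commutator G a x = phi h" using h by (simp add: comm_ah x_def)
      moreover have "((\<lambda>u. commutator G u x) ^^ k) (phi h) = (phi ^^ k) (phi h)"
        by (rule funpow_agree[of H]) (use h x in \<open>simp_all add: psi_H x_def psi_ah\<close>)
      ultimately show ?thesis by simp
    qed
    also have "\<dots> = (phi ^^ Suc k) h" by (simp add: funpow_Suc_right del: funpow.simps)
    finally show ?thesis .
  qed
  have "\<forall>n\<ge>Suc N. (phi ^^ n) h \<in> S"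
  proof (intro allI impI)
    fix n assume "n \<ge> Suc N"
    then obtain k where "n = Suc k" "k \<ge> N" by (cases n) auto
    thus "(phi ^^ n) h \<in> S" using N eq[of k] by (metis le_SucI)
  qed
  thus "\<exists>N. \<forall>n\<ge>N. (phi ^^ n) h \<in> S" by blast
qed

lemma left_sink_P: assumes "Cond P" shows "left_engel_sink G a P"
  unfolding left_engel_sink_def
proof
  fix x assume x: "x \<in> carrier G"
  have c: "commutator G x a \<in> H" by (rule R1'[OF x])
  then obtain N where N: "\<forall>n\<ge>N. (phi ^^ n) (commutator G x a) \<in> P"
    using assms by (auto simp: Cond_def)
  have eq: "engel_comm G x a (Suc k) = (phi ^^ k) (commutator G x a)" for k
    by (simp add: engel_funpow funpow_Suc_right phi_def del: funpow.simps)
  have "\<forall>n\<ge>Suc N. engel_comm G x a n \<in> P"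
  proof (intro allI impI)
    fix n assume "n \<ge> Suc N"
    then obtain k where "n = Suc k" "k \<ge> N" by (cases n) auto
    thus "engel_comm G x a n \<in> P" using N eq[of k] by metis
  qed
  thus "\<exists>N. \<forall>n\<ge>N. engel_comm G x a n \<in> P" by blast
qed

lemma right_sink_P: assumes "Cond P" shows "right_engel_sink G a P"
  unfolding right_engel_sink_def
proof
  fix x assume x: "x \<in> carrier G"
  have c: "commutator G a x \<in> H" by (rule R1[OF x])
  then obtain N where N: "\<forall>n\<ge>N. (phi ^^ n) (commutator G a x) \<in> P"
    using assms by (auto simp: Cond_def)
  have eq: "engel_comm G a x (Suc k) = ((\<lambda>u. commutator G u x) ^^ k) (commutator G a x)" for k
    by (simp add: engel_funpow funpow_Suc_right del: funpow.simps)
  have "\<forall>n\<ge>Suc N. engel_comm G a x n \<in> P"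
  proof (intro allI impI)
    fix n assume "n \<ge> Suc N"
    then obtain k where "n = Suc k" "k \<ge> N" by (cases n) auto
    thus "engel_comm G a x n \<in> P" using N eq[of k] psi_eventually[OF x c, of N k] by simp
  qed
  thus "\<exists>N. \<forall>n\<ge>N. engel_comm G a x n \<in> P" by blast
qed

lemma main: "(almost_right_engel G a \<longleftrightarrow> almost_left_engel G a) \<and>
         (almost_right_engel G a \<longrightarrow> min_left_sink G a = min_right_sink G a)"
proof -
  have R: "finite P \<and> Cond P" if "almost_right_engel G a"
    using that right_Cond Cond_consequences unfolding almost_right_engel_def by blast
  have L: "finite P \<and> Cond P" if "almost_left_engel G a"
    using that left_Cond Cond_consequences unfolding almost_left_engel_def by blast
  have iff: "almost_right_engel G a \<longleftrightarrow> almost_left_engel G a"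
    using R L left_sink_P right_sink_P
    unfolding almost_right_engel_def almost_left_engel_def by blast
  have "min_left_sink G a = min_right_sink G a" if r: "almost_right_engel G a"
  proof -
    have fP: "finite P" and cP: "Cond P" using R[OF r] by auto
    have "min_left_sink G a = P"
      unfolding min_left_sink_def
    proof (rule the_equality)
      show "finite P \<and> left_engel_sink G a P \<and>
        (\<forall>T. finite T \<and> left_engel_sink G a T \<longrightarrow> P \<subseteq> T)"
        using fP left_sink_P[OF cP] left_Cond Cond_consequences(1) by blast
    next
      fix S assume "finite S \<and> left_engel_sink G a S \<and>
        (\<forall>T. finite T \<and> left_engel_sink G a T \<longrightarrow> S \<subseteq> T)"
      thus "S = P" using fP left_sink_P[OF cP] left_Cond Cond_consequences(1) by blast
    qed
    moreover have "min_right_sink G a = P"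
      unfolding min_right_sink_def
    proof (rule the_equality)
      show "finite P \<and> right_engel_sink G a P \<and>
        (\<forall>T. finite T \<and> right_engel_sink G a T \<longrightarrow> P \<subseteq> T)"
        using fP right_sink_P[OF cP] right_Cond Cond_consequences(1) by blast
    next
      fix S assume "finite S \<and> right_engel_sink G a S \<and>
        (\<forall>T. finite T \<and> right_engel_sink G a T \<longrightarrow> S \<subseteq> T)"
      thus "S = P" using fP right_sink_P[OF cP] right_Cond Cond_consequences(1) by blast
    qed
    ultimately show ?thesis by simp
  qed
  thus ?thesis using iff by blast
qed

end

theorem lemma3p1:
  fixes G (structure) and H :: "'a set" and a :: 'a
  assumes "group G"
    and "H \<lhd> G"
    and "\<forall>x\<in>H. \<forall>y\<in>H. x \<otimes> y = y \<otimes> x"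
    and "a \<in> carrier G"
    and "carrier G = generate G (H \<union> {a})"
  shows "(almost_right_engel G a \<longleftrightarrow> almost_left_engel G a) \<and>
         (almost_right_engel G a \<longrightarrow> min_left_sink G a = min_right_sink G a)"
proof -
  interpret E: es H G a
    using assms by (intro es.intro) (auto simp: es_axioms_def)
  show ?thesis by (rule E.main)
qed

end
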